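(* Let $H$ be a finite simple graph with $n=|V(H)|\ge1$ vertices, chromatic number $\chi=\chi(H)$, and $m'(H)$ non-edges. Then $$\left\lceil \frac{n}{\chi} \right\rceil \left( n - \frac{\chi}{2}\left\lceil\frac{n}{\chi}-1\right\rceil\right) = n+m'(H)$$ holds if and only if $H$ is a Turán graph.
   Context: All graphs are finite and simple. A non-edge of $H$ is an unordered pair of distinct non-adjacent vertices. The Turán graph $T(n,r)$ is the complete $r$-partite graph on $n$ vertices whose $r$ classes have sizes as equal as possible (any two class sizes differ by at most one); a Turán graph is a graph isomorphic to some $T(n,r)$. *)

theory Defs
  imports Complex_Main
begin

definition simple_graph :: "'a set \<Rightarrow> ('a \<Rightarrow> 'a \<Rightarrow> bool) \<Rightarrow> bool" where
  "simple_graph V E \<longleftrightarrow> finite V \<and> (\<forall>x y. E x y \<longrightarrow> x \<in> V \<and> y \<in> V)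
     \<and> (\<forall>x y. E x y \<longrightarrow> E y x) \<and> (\<forall>x. \<not> E x x)"

definition proper_colouring :: "'a set \<Rightarrow> ('a \<Rightarrow> 'a \<Rightarrow> bool) \<Rightarrow> nat \<Rightarrow> ('a \<Rightarrow> nat) \<Rightarrow> bool" where
  "proper_colouring V E k c \<longleftrightarrow> (\<forall>v\<in>V. c v < k) \<and> (\<forall>x\<in>V. \<forall>y\<in>V. E x y \<longrightarrow> c x \<noteq> c y)"

definition chromatic_number :: "'a set \<Rightarrow> ('a \<Rightarrow> 'a \<Rightarrow> bool) \<Rightarrow> nat" where
  "chromatic_number V E = (LEAST k. \<exists>c. proper_colouring V E k c)"

definition non_edges :: "'a set \<Rightarrow> ('a \<Rightarrow> 'a \<Rightarrow> bool) \<Rightarrow> 'a set set" where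
  "non_edges V E = {{x, y} | x y. x \<in> V \<and> y \<in> V \<and> x \<noteq> y \<and> \<not> E x y}"

text \<open>H is a Turan graph: isomorphic to T(n,r) for some r \<ge> 1, i.e. V splits into r
  classes (indexed 0..<r) with sizes pairwise differing by at most one, and two distinct
  vertices are adjacent iff they lie in different classes.\<close>
definition turan_graph :: "'a set \<Rightarrow> ('a \<Rightarrow> 'a \<Rightarrow> bool) \<Rightarrow> bool" where
  "turan_graph V E \<longleftrightarrow> (\<exists>r::nat. \<exists>c::'a \<Rightarrow> nat. r \<ge> 1 \<and> (\<forall>v\<in>V. c v < r)
     \<and> (\<forall>i<r. \<forall>j<r. card {v\<in>V. c v = i} \<le> card {v\<in>V. c v = j} + 1)
     \<and> (\<forall>x\<in>V. \<forall>y\<in>V. x \<noteq> y \<longrightarrow> (E x y \<longleftrightarrow> c x \<noteq> c y)))"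

end

theory Submission
  imports Defs
begin

definition pairs :: "'a set \<Rightarrow> 'a set set" where
  "pairs A = {{x, y} | x y. x \<in> A \<and> y \<in> A \<and> x \<noteq> y}"

lemma pairs_card: assumes "finite A" shows "card (pairs A) = card A choose 2"
proof -
  have "pairs A = {B. B \<subseteq> A \<and> card B = 2}"
    unfolding pairs_def by (auto simp: card_2_iff)
  thus ?thesis using n_subsets[OF assms] by simp
qed

lemma sizes_sum:
  fixes c :: "'a \<Rightarrow> nat"
  assumes "finite V" "\<forall>v\<in>V. c v < k"
  shows "(\<Sum>i<k. card {v\<in>V. c v = i}) = card V"
proof -
  have "V = (\<Union>i\<in>{..<k}. {v\<in>V. c v = i})" using assms(2) by auto
  hence "card V = card (\<Union>i\<in>{..<k}. {v\<in>V. c v = i})" by simp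
  also have "\<dots> = (\<Sum>i<k. card {v\<in>V. c v = i})"
    by (rule card_UN_disjoint) (use assms(1) in auto)
  finally show ?thesis by simp
qed

lemma within_card:
  fixes c :: "'a \<Rightarrow> nat"
  assumes "finite V" "\<forall>v\<in>V. c v < k"
  shows "card {{x, y} | x y. x \<in> V \<and> y \<in> V \<and> x \<noteq> y \<and> c x = c y}
          = (\<Sum>i<k. card {v\<in>V. c v = i} choose 2)"
proof -
  have eq: "{{x, y} | x y. x \<in> V \<and> y \<in> V \<and> x \<noteq> y \<and> c x = c y}
     = (\<Union>i\<in>{..<k}. pairs {v\<in>V. c v = i})"
    using assms(2) unfolding pairs_def by fastforce
  have "card (\<Union>i\<in>{..<k}. pairs {v\<in>V. c v = i}) = (\<Sum>i<k. card (pairs {v\<in>V. c v = i}))"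
  proof (rule card_UN_disjoint)
    show "\<forall>i\<in>{..<k}. finite (pairs {v \<in> V. c v = i})"
    proof
      fix i show "finite (pairs {v \<in> V. c v = i})"
        by (rule finite_subset[of _ "Pow V"]) (auto simp: pairs_def assms(1))
    qed
    show "\<forall>i\<in>{..<k}. \<forall>j\<in>{..<k}. i \<noteq> j \<longrightarrow> pairs {v \<in> V. c v = i} \<inter> pairs {v \<in> V. c v = j} = {}"
      unfolding pairs_def by (auto simp: doubleton_eq_iff)
  qed simp
  also have "\<dots> = (\<Sum>i<k. card {v\<in>V. c v = i} choose 2)"
    by (rule sum.cong) (auto intro!: pairs_card simp: assms(1))
  finally show ?thesis using eq by simp
qed

lemma choose2_int: "2 * int (a choose 2) = int a * (int a - 1)"
proof -
  have "even (a * (a - 1))" by (cases "even a") auto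
  hence "2 * (a choose 2) = a * (a - 1)" by (simp add: choose_two)
  hence "int (2 * (a choose 2)) = int (a * (a - 1))" by simp
  thus ?thesis by (cases a) (auto simp: algebra_simps)
qed


lemma arith_id:
  fixes a :: "nat \<Rightarrow> nat" and t :: int
  shows "2 * (\<Sum>i<k. int (a i choose 2)) = (t - 1) * (2 * int (\<Sum>i<k. a i)) - int k * t * (t - 1)
     + (\<Sum>i<k. (int (a i) - t) * (int (a i) - t + 1))"
proof -
  have "2 * (\<Sum>i<k. int (a i choose 2)) = (\<Sum>i<k. 2 * int (a i choose 2))"
    by (simp add: sum_distrib_left)
  also have "\<dots> = (\<Sum>i<k. (2 * (t - 1) * int (a i) - t * (t - 1)) + (int (a i) - t) * (int (a i) - t + 1))"
    by (rule sum.cong) (simp_all add: choose2_int algebra_simps)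
  also have "\<dots> = (t - 1) * (2 * int (\<Sum>i<k. a i)) - int k * t * (t - 1)
     + (\<Sum>i<k. (int (a i) - t) * (int (a i) - t + 1))"
    by (simp add: sum.distrib sum_subtractf sum_distrib_left of_nat_sum algebra_simps)
  finally show ?thesis .
qed


lemma h_nonneg': "((x::int) - t) * (x - t + 1) \<ge> 0"
proof (cases "x \<ge> t")
  case True thus ?thesis by simp
next
  case False thus ?thesis by (simp add: mult_nonpos_nonpos)
qed

lemma h_zero: "((x::int) - t) * (x - t + 1) = 0 \<longleftrightarrow> x = t \<or> x = t - 1"
  by (subst mult_eq_0_iff) arith


lemma bal_iff:
  fixes a :: "nat \<Rightarrow> nat" and t :: int
  assumes "(\<Sum>i<k. a i) = n" "int k * (t - 1) < int n" "int n \<le> int k * t"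
  shows "(\<forall>i<k. \<forall>j<k. a i \<le> a j + 1) \<longleftrightarrow> (\<forall>i<k. int (a i) = t \<or> int (a i) = t - 1)"
proof
  assume B: "\<forall>i<k. \<forall>j<k. a i \<le> a j + 1"
  show "\<forall>i<k. int (a i) = t \<or> int (a i) = t - 1"
  proof (intro allI impI)
    fix i assume i: "i < k"
    have "int n = (\<Sum>j<k. int (a j))" using assms(1) by auto
    also have "\<dots> = int (a i) + (\<Sum>j\<in>{..<k} - {i}. int (a j))"
      by (rule sum.remove) (use i in auto)
    finally have S: "int n = int (a i) + (\<Sum>j\<in>{..<k} - {i}. int (a j))" .
    have KM: "int (k - 1) * t = int k * t - t" "int (k - 1) * (t - 1) = int k * (t - 1) - (t - 1)"
      using i by (simp_all add: of_nat_diff left_diff_distrib)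
    have C: "card ({..<k} - {i}) = k - 1" using i by simp
    show "int (a i) = t \<or> int (a i) = t - 1"
    proof (rule ccontr)
      assume "\<not> ?thesis"
      hence "int (a i) \<ge> t + 1 \<or> int (a i) \<le> t - 2" by linarith
      thus False
      proof
        assume h: "int (a i) \<ge> t + 1"
        have "\<forall>j\<in>{..<k} - {i}. t \<le> int (a j)"
        proof
          fix j assume "j \<in> {..<k} - {i}"
          hence "a i \<le> a j + 1" using B i by auto
          thus "t \<le> int (a j)" using h by linarith
        qed
        hence "of_nat (card ({..<k} - {i})) * t \<le> (\<Sum>j\<in>{..<k} - {i}. int (a j))"
          by (intro sum_bounded_below) auto
        hence "int n \<ge> t + 1 + int (k - 1) * t" using S h C by simp
        thus False using assms(3) KM by linarith
      next
        assume h: "int (a i) \<le> t - 2"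
        have "\<forall>j\<in>{..<k} - {i}. int (a j) \<le> t - 1"
        proof
          fix j assume "j \<in> {..<k} - {i}"
          hence "a j \<le> a i + 1" using B i by auto
          thus "int (a j) \<le> t - 1" using h by linarith
        qed
        hence "(\<Sum>j\<in>{..<k} - {i}. int (a j)) \<le> of_nat (card ({..<k} - {i})) * (t - 1)"
          by (intro sum_bounded_above) auto
        hence "int n \<le> t - 2 + int (k - 1) * (t - 1)" using S h C by simp
        thus False using assms(2) KM by linarith
      qed
    qed
  qed
next
  assume H: "\<forall>i<k. int (a i) = t \<or> int (a i) = t - 1"
  show "\<forall>i<k. \<forall>j<k. a i \<le> a j + 1"
  proof (intro allI impI)
    fix i j assume "i < k" "j < k"
    hence "int (a i) = t \<or> int (a i) = t - 1" "int (a j) = t \<or> int (a j) = t - 1" using H by auto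
    thus "a i \<le> a j + 1" by linarith
  qed
qed


lemma key:
  fixes c :: "'a \<Rightarrow> nat"
  assumes G: "simple_graph V E" and P: "proper_colouring V E k c" and k: "k \<ge> 1"
  defines "t \<equiv> \<lceil>real (card V) / real k\<rceil>"
  shows "(t - 1) * (2 * int (card V)) - int k * t * (t - 1) \<le> 2 * int (card (non_edges V E))"
    and "(t - 1) * (2 * int (card V)) - int k * t * (t - 1) = 2 * int (card (non_edges V E)) \<longleftrightarrow>
        ((\<forall>i<k. \<forall>j<k. card {v\<in>V. c v = i} \<le> card {v\<in>V. c v = j} + 1)
         \<and> (\<forall>x\<in>V. \<forall>y\<in>V. x \<noteq> y \<longrightarrow> \<not> E x y \<longrightarrow> c x = c y))"
proof -
  have fin: "finite V" using G by (simp add: simple_graph_def)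
  have cV: "\<forall>v\<in>V. c v < k" using P by (simp add: proper_colouring_def)
  have prp: "\<And>x y. x \<in> V \<Longrightarrow> y \<in> V \<Longrightarrow> E x y \<Longrightarrow> c x \<noteq> c y"
    using P by (simp add: proper_colouring_def)
  define s where "s i = card {v\<in>V. c v = i}" for i
  define W where "W = {{x, y} | x y. x \<in> V \<and> y \<in> V \<and> x \<noteq> y \<and> c x = c y}"
  define NE where "NE = non_edges V E"
  define Gv where "Gv = (t - 1) * (2 * int (card V)) - int k * t * (t - 1)"
  define hs where "hs = (\<Sum>i<k. (int (s i) - t) * (int (s i) - t + 1))"
  have ssum: "(\<Sum>i<k. s i) = card V" unfolding s_def by (rule sizes_sum[OF fin cV])
  have cW: "card W = (\<Sum>i<k. s i choose 2)" unfolding W_def s_def by (rule within_card[OF fin cV])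
  have WNE: "W \<subseteq> NE"
    unfolding W_def NE_def non_edges_def using prp by blast
  have finNE: "finite NE"
    by (rule finite_subset[of _ "Pow V"]) (auto simp: NE_def non_edges_def fin)
  have le: "card W \<le> card NE" by (rule card_mono[OF finNE WNE])
  have cc: "real_of_int t - 1 < real (card V) / real k \<and> real (card V) / real k \<le> real_of_int t"
    unfolding t_def by (rule ceiling_correct)
  have kpos: "real k > 0" using k by simp
  have "real_of_int (int k * (t - 1)) < real_of_int (int (card V))"
    using cc kpos by (simp add: less_divide_eq mult.commute)
  hence tb1: "int k * (t - 1) < int (card V)" by (simp only: of_int_less_iff)
  have "real_of_int (int (card V)) \<le> real_of_int (int k * t)"
    using cc kpos by (simp add: divide_le_eq mult.commute)
  hence tb2: "int (card V) \<le> int k * t" by (simp only: of_int_le_iff)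
  have ID: "2 * int (card W) = Gv + hs"
    unfolding Gv_def hs_def cW using arith_id[of s k t] ssum by simp
  have hs0: "hs \<ge> 0" unfolding hs_def by (rule sum_nonneg) (rule h_nonneg')
  show "(t - 1) * (2 * int (card V)) - int k * t * (t - 1) \<le> 2 * int (card (non_edges V E))"
    using ID hs0 le unfolding Gv_def NE_def by linarith
  have "Gv = 2 * int (card NE) \<longleftrightarrow> hs = 0 \<and> card W = card NE"
    using ID hs0 le by linarith
  also have "(hs = 0) \<longleftrightarrow> (\<forall>i<k. \<forall>j<k. s i \<le> s j + 1)"
  proof -
    have "hs = 0 \<longleftrightarrow> (\<forall>i\<in>{..<k}. (int (s i) - t) * (int (s i) - t + 1) = 0)"
      unfolding hs_def by (rule sum_nonneg_eq_0_iff) (auto intro: h_nonneg')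
    also have "\<dots> \<longleftrightarrow> (\<forall>i<k. int (s i) = t \<or> int (s i) = t - 1)"
      using h_zero by (auto simp del: mult_eq_0_iff)
    also have "\<dots> \<longleftrightarrow> (\<forall>i<k. \<forall>j<k. s i \<le> s j + 1)"
      using bal_iff[OF ssum tb1 tb2] by simp
    finally show ?thesis .
  qed
  also have "(card W = card NE) \<longleftrightarrow> (\<forall>x\<in>V. \<forall>y\<in>V. x \<noteq> y \<longrightarrow> \<not> E x y \<longrightarrow> c x = c y)"
  proof
    assume "card W = card NE"
    hence WE: "W = NE" using card_subset_eq[OF finNE WNE] by simp
    show "\<forall>x\<in>V. \<forall>y\<in>V. x \<noteq> y \<longrightarrow> \<not> E x y \<longrightarrow> c x = c y"
    proof (intro ballI impI)
      fix x y assume xy: "x \<in> V" "y \<in> V" "x \<noteq> y" "\<not> E x y"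
      hence "{x, y} \<in> NE" unfolding NE_def non_edges_def by blast
      hence "{x, y} \<in> W" using WE by simp
      then obtain x' y' where "{x, y} = {x', y'}" "c x' = c y'" unfolding W_def by blast
      thus "c x = c y" by (auto simp: doubleton_eq_iff)
    qed
  next
    assume C: "\<forall>x\<in>V. \<forall>y\<in>V. x \<noteq> y \<longrightarrow> \<not> E x y \<longrightarrow> c x = c y"
    have "NE \<subseteq> W" unfolding NE_def non_edges_def W_def using C by blast
    thus "card W = card NE" using WNE by auto
  qed
  finally show "(t - 1) * (2 * int (card V)) - int k * t * (t - 1) = 2 * int (card (non_edges V E)) \<longleftrightarrow>
        ((\<forall>i<k. \<forall>j<k. card {v\<in>V. c v = i} \<le> card {v\<in>V. c v = j} + 1)
         \<and> (\<forall>x\<in>V. \<forall>y\<in>V. x \<noteq> y \<longrightarrow> \<not> E x y \<longrightarrow> c x = c y))"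
    unfolding Gv_def NE_def s_def .
qed


lemma real_eq:
  fixes n k m :: nat
  assumes "k \<ge> 1"
  shows "(let nn = real n; \<chi> = real k in
           of_int \<lceil>nn / \<chi>\<rceil> * (nn - \<chi> / 2 * of_int \<lceil>nn / \<chi> - 1\<rceil>) = nn + real m)
     \<longleftrightarrow> (\<lceil>real n / real k\<rceil> - 1) * (2 * int n) - int k * \<lceil>real n / real k\<rceil> * (\<lceil>real n / real k\<rceil> - 1) = 2 * int m"
proof -
  define t where "t = \<lceil>real n / real k\<rceil>"
  have c1: "\<lceil>real n / real k - 1\<rceil> = t - 1" unfolding t_def by simp
  have A: "of_int t * (real n - real k / 2 * of_int (t - 1)) = real_of_int (t * (2 * int n - int k * (t - 1))) / 2"
    by (simp add: field_simps)
  have B: "real n + real m = real_of_int (2 * int n + 2 * int m) / 2" by simp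
  have "(of_int t * (real n - real k / 2 * of_int (t - 1)) = real n + real m)
        \<longleftrightarrow> t * (2 * int n - int k * (t - 1)) = 2 * int n + 2 * int m"
    unfolding A B by (simp only: divide_cancel_right of_int_eq_iff) simp
  also have "\<dots> \<longleftrightarrow> (t - 1) * (2 * int n) - int k * t * (t - 1) = 2 * int m"
  proof -
    have "t * (2 * int n - int k * (t - 1)) - 2 * int n = (t - 1) * (2 * int n) - int k * t * (t - 1)"
      by (simp add: algebra_simps)
    thus ?thesis by linarith
  qed
  finally show ?thesis unfolding Let_def c1[unfolded t_def] t_def .
qed

lemma chrom_exists:
  assumes G: "simple_graph V E"
  shows "\<exists>d. proper_colouring V E (chromatic_number V E) d"
proof -
  have fin: "finite V" using G by (simp add: simple_graph_def)
  obtain f where f: "bij_betw f V {0..<card V}" using ex_bij_betw_finite_nat[OF fin] by blast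
  have "proper_colouring V E (card V) f"
    unfolding proper_colouring_def
  proof (intro conjI ballI impI)
    fix v assume "v \<in> V" thus "f v < card V" using bij_betw_apply[OF f] by auto
  next
    fix x y assume "x \<in> V" "y \<in> V" "E x y"
    moreover have "x \<noteq> y" using G \<open>E x y\<close> unfolding simple_graph_def by blast
    ultimately show "f x \<noteq> f y" using f unfolding bij_betw_def inj_on_def by blast
  qed
  hence "\<exists>k c. proper_colouring V E k c" by blast
  thus ?thesis unfolding chromatic_number_def by (rule LeastI_ex[where P = "\<lambda>k. \<exists>c. proper_colouring V E k c"]) 
qed

lemma chrom_le: "proper_colouring V E k c \<Longrightarrow> chromatic_number V E \<le> k"
  unfolding chromatic_number_def by (rule Least_le) blast

lemma turan_reduce:
  assumes G: "simple_graph V E" and T: "turan_graph V E" and n1: "card V \<ge> 1"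
  shows "\<exists>r c. r \<ge> 1 \<and> r \<le> card V \<and> (\<forall>v\<in>V. c v < r)
     \<and> (\<forall>i<r. \<forall>j<r. card {v\<in>V. c v = i} \<le> card {v\<in>V. c v = j} + 1)
     \<and> (\<forall>x\<in>V. \<forall>y\<in>V. x \<noteq> y \<longrightarrow> (E x y \<longleftrightarrow> c x \<noteq> c y))"
proof -
  have fin: "finite V" using G by (simp add: simple_graph_def)
  obtain r and c :: "'a \<Rightarrow> nat" where r: "r \<ge> 1" and cr: "\<forall>v\<in>V. c v < r"
    and bal: "\<forall>i<r. \<forall>j<r. card {v\<in>V. c v = i} \<le> card {v\<in>V. c v = j} + 1"
    and iff: "\<forall>x\<in>V. \<forall>y\<in>V. x \<noteq> y \<longrightarrow> (E x y \<longleftrightarrow> c x \<noteq> c y)"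
    using T unfolding turan_graph_def by blast
  show ?thesis
  proof (cases "r \<le> card V")
    case True thus ?thesis using r cr bal iff by blast
  next
    case False
    have "\<exists>i0<r. card {v\<in>V. c v = i0} = 0"
    proof (rule ccontr)
      assume "\<not> ?thesis"
      hence "\<forall>i\<in>{..<r}. 1 \<le> card {v\<in>V. c v = i}" by force
      hence "of_nat (card {..<r}) * 1 \<le> (\<Sum>i<r. card {v\<in>V. c v = i})"
        by (intro sum_bounded_below) auto
      thus False using sizes_sum[OF fin cr] False by simp
    qed
    then obtain i0 where i0: "i0 < r" "card {v\<in>V. c v = i0} = 0" by blast
    have le1: "\<forall>i<r. card {v\<in>V. c v = i} \<le> 1" using bal i0 by force
    have injc: "\<forall>x\<in>V. \<forall>y\<in>V. x \<noteq> y \<longrightarrow> c x \<noteq> c y"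
    proof (intro ballI impI notI)
      fix x y assume xy: "x \<in> V" "y \<in> V" "x \<noteq> y" "c x = c y"
      have "{x, y} \<subseteq> {v\<in>V. c v = c x}" using xy by auto
      hence "card {x, y} \<le> card {v\<in>V. c v = c x}" by (rule card_mono[rotated]) (simp add: fin)
      moreover have "card {v\<in>V. c v = c x} \<le> 1" using le1 cr xy(1) by blast
      ultimately show False using xy(3) by simp
    qed
    obtain f where f: "bij_betw f V {0..<card V}" using ex_bij_betw_finite_nat[OF fin] by blast
    have injf: "inj_on f V" using f by (simp add: bij_betw_def)
    have fV: "\<forall>v\<in>V. f v < card V" using bij_betw_apply[OF f] by auto
    have one: "\<forall>i<card V. card {v\<in>V. f v = i} = 1"
    proof (intro allI impI)
      fix i assume "i < card V"
      hence "i \<in> f ` V" using f by (simp add: bij_betw_def)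
      then obtain v where v: "v \<in> V" "f v = i" by blast
      have "{w\<in>V. f w = i} = {v}" using v injf unfolding inj_on_def by blast
      thus "card {v\<in>V. f v = i} = 1" by simp
    qed
    have "(\<forall>i<card V. \<forall>j<card V. card {v\<in>V. f v = i} \<le> card {v\<in>V. f v = j} + 1)"
      using one by simp
    moreover have "\<forall>x\<in>V. \<forall>y\<in>V. x \<noteq> y \<longrightarrow> (E x y \<longleftrightarrow> f x \<noteq> f y)"
      using iff injc injf unfolding inj_on_def by blast
    ultimately show ?thesis using n1 fV by blast
  qed
qed

lemma turan_chi:
  fixes c :: "'a \<Rightarrow> nat"
  assumes G: "simple_graph V E" and r: "r \<ge> 1" "r \<le> card V" and cr: "\<forall>v\<in>V. c v < r"
    and bal: "\<forall>i<r. \<forall>j<r. card {v\<in>V. c v = i} \<le> card {v\<in>V. c v = j} + 1"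
    and iff: "\<forall>x\<in>V. \<forall>y\<in>V. x \<noteq> y \<longrightarrow> (E x y \<longleftrightarrow> c x \<noteq> c y)"
  shows "proper_colouring V E r c" and "chromatic_number V E = r"
proof -
  have fin: "finite V" using G by (simp add: simple_graph_def)
  have irr: "\<And>x y. E x y \<Longrightarrow> x \<noteq> y" using G unfolding simple_graph_def by blast
  show P: "proper_colouring V E r c"
    unfolding proper_colouring_def using cr iff irr by blast
  have ne: "\<forall>i<r. \<exists>v\<in>V. c v = i"
  proof (rule ccontr)
    assume "\<not> ?thesis"
    then obtain i0 where i0: "i0 < r" "\<forall>v\<in>V. c v \<noteq> i0" by blast
    hence "{v\<in>V. c v = i0} = {}" by auto
    hence z: "card {v\<in>V. c v = i0} = 0" by (simp only: card.empty)
    have le1: "\<forall>j\<in>{..<r} - {i0}. card {v\<in>V. c v = j} \<le> 1" using bal i0(1) z by force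
    have "card V = (\<Sum>j<r. card {v\<in>V. c v = j})" using sizes_sum[OF fin cr] by simp
    also have "\<dots> = card {v\<in>V. c v = i0} + (\<Sum>j\<in>{..<r} - {i0}. card {v\<in>V. c v = j})"
      by (rule sum.remove) (use i0 in auto)
    also have "\<dots> \<le> 0 + card ({..<r} - {i0}) * 1"
    proof -
      have "(\<Sum>j\<in>{..<r} - {i0}. card {v\<in>V. c v = j}) \<le> of_nat (card ({..<r} - {i0})) * 1"
        by (rule sum_bounded_above) (use le1 in auto)
      thus ?thesis using z by simp
    qed
    also have "\<dots> = r - 1" using i0 by simp
    finally show False using r by simp
  qed
  define rep where "rep i = (SOME v. v \<in> V \<and> c v = i)" for i
  have rep: "\<And>i. i < r \<Longrightarrow> rep i \<in> V \<and> c (rep i) = i"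
    unfolding rep_def using ne by (metis (mono_tags, lifting) someI_ex)
  obtain d where d: "proper_colouring V E (chromatic_number V E) d" using chrom_exists[OF G] by blast
  have "inj_on (d \<circ> rep) {..<r}"
  proof (rule inj_onI)
    fix i j assume ij: "i \<in> {..<r}" "j \<in> {..<r}" "(d \<circ> rep) i = (d \<circ> rep) j"
    show "i = j"
    proof (rule ccontr)
      assume "i \<noteq> j"
      moreover have "c (rep i) = i" "c (rep j) = j" using rep ij by auto
      ultimately have "rep i \<noteq> rep j" "c (rep i) \<noteq> c (rep j)" by metis+
      hence "E (rep i) (rep j)" using iff rep ij by auto
      hence "d (rep i) \<noteq> d (rep j)" using d rep ij unfolding proper_colouring_def by auto
      thus False using ij by simp
    qed
  qed
  moreover have "(d \<circ> rep) ` {..<r} \<subseteq> {..<chromatic_number V E}"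
    using d rep unfolding proper_colouring_def by auto
  ultimately have "card {..<r} \<le> card {..<chromatic_number V E}"
    by (rule card_inj_on_le) auto
  hence "r \<le> chromatic_number V E" by simp
  moreover have "chromatic_number V E \<le> r" by (rule chrom_le[OF P])
  ultimately show "chromatic_number V E = r" by simp
qed

theorem theorem1p2:
  fixes V :: "'a set" and E :: "'a \<Rightarrow> 'a \<Rightarrow> bool"
  assumes "simple_graph V E" and "card V \<ge> 1"
  shows "(let n = real (card V); \<chi> = real (chromatic_number V E) in
           of_int \<lceil>n / \<chi>\<rceil> * (n - \<chi> / 2 * of_int \<lceil>n / \<chi> - 1\<rceil>)
             = n + real (card (non_edges V E)))
         \<longleftrightarrow> turan_graph V E"
proof -
  note G = assms(1)
  obtain d where d: "proper_colouring V E (chromatic_number V E) d" using chrom_exists[OF G] by blast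
  have Vne: "V \<noteq> {}" using assms(2) by auto
  then obtain v0 where "v0 \<in> V" by blast
  hence chi1: "chromatic_number V E \<ge> 1" using d unfolding proper_colouring_def by force
  show ?thesis
  proof (subst real_eq[OF chi1], rule iffI)
    assume "(\<lceil>real (card V) / real (chromatic_number V E)\<rceil> - 1) * (2 * int (card V)) -
      int (chromatic_number V E) * \<lceil>real (card V) / real (chromatic_number V E)\<rceil> *
      (\<lceil>real (card V) / real (chromatic_number V E)\<rceil> - 1) = 2 * int (card (non_edges V E))"
    hence H: "(\<forall>i<chromatic_number V E. \<forall>j<chromatic_number V E. card {v\<in>V. d v = i} \<le> card {v\<in>V. d v = j} + 1)
         \<and> (\<forall>x\<in>V. \<forall>y\<in>V. x \<noteq> y \<longrightarrow> \<not> E x y \<longrightarrow> d x = d y)"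
      using key(2)[OF G d chi1] by simp
    have "\<forall>x\<in>V. \<forall>y\<in>V. x \<noteq> y \<longrightarrow> (E x y \<longleftrightarrow> d x \<noteq> d y)"
      using H d unfolding proper_colouring_def by blast
    thus "turan_graph V E" unfolding turan_graph_def using chi1 d H
      unfolding proper_colouring_def by blast
  next
    assume "turan_graph V E"
    then obtain r and c :: "'a \<Rightarrow> nat" where r: "r \<ge> 1" "r \<le> card V" and cr: "\<forall>v\<in>V. c v < r"
      and bal: "\<forall>i<r. \<forall>j<r. card {v\<in>V. c v = i} \<le> card {v\<in>V. c v = j} + 1"
      and iff: "\<forall>x\<in>V. \<forall>y\<in>V. x \<noteq> y \<longrightarrow> (E x y \<longleftrightarrow> c x \<noteq> c y)"
      using turan_reduce[OF G _ assms(2)] by blast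
    have P: "proper_colouring V E r c" and chi: "chromatic_number V E = r"
      using turan_chi[OF G r cr bal iff] by auto
    show "(\<lceil>real (card V) / real (chromatic_number V E)\<rceil> - 1) * (2 * int (card V)) -
      int (chromatic_number V E) * \<lceil>real (card V) / real (chromatic_number V E)\<rceil> *
      (\<lceil>real (card V) / real (chromatic_number V E)\<rceil> - 1) = 2 * int (card (non_edges V E))"
      unfolding chi using key(2)[OF G P r(1)] bal iff by blast
  qed
qed

end
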